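(* Let $\Lambda$ be a left cancellative small category. Consider the conditions: (1) $\sim_1=\sim_2$ on $\mathcal Z*X$; (2) for every $v\in\Lambda^0$, every nonempty $E\in\mathcal A_v$, every $\alpha\in E$, and every invertible $\mu\in\Lambda$ with $r(\mu)=s(\mu)=s(\alpha)$ and $\mu\ne s(\alpha)$, there is $\beta\in s(\alpha)\Lambda$ such that $\alpha\beta\in E$ and either $\mu\beta\notin\beta\Lambda$ or $\mu^{-1}\beta\notin\beta\Lambda$. Then (2) implies (1). If moreover $\Lambda$ is right cancellative, then (1) implies (2).
   Context: A left cancellative small category (LCSC) is a small category $\Lambda$ such that $\alpha\beta=\alpha\gamma$ implies $\beta=\gamma$; right cancellative means $\beta\alpha=\gamma\alpha$ implies $\beta=\gamma$. Composition $\alpha\beta$ is defined when $s(\alpha)=r(\beta)$; $\Lambda^0$ is the set of objects (identity morphisms); $v\Lambda=\{\alpha:r(\alpha)=v\}$; $\alpha\Lambda=\{\alpha\beta:r(\beta)=s(\alpha)\}$. For $\alpha\in\Lambda$, $\tau^\alpha(\beta)=\alpha\beta$ on $s(\alpha)\Lambda$ and $\sigma^\alpha:\alpha\Lambda\to s(\alpha)\Lambda$ is its inverse. A zigzag is a tuple $\zeta=(\alpha_1,\beta_1,\dots,\alpha_n,\beta_n)$ with $r(\alpha_i)=r(\beta_i)$ and $s(\alpha_{i+1})=s(\beta_i)$; $\mathcal Z$ is the set of zigzags, $s(\zeta)=s(\beta_n)$, $r(\zeta)=s(\alpha_1)$, $\mathcal Zv=\{\zeta:s(\zeta)=v\}$,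 $\overline\zeta=(\beta_n,\alpha_n,\dots,\beta_1,\alpha_1)$. The zigzag map $\varphi_\zeta=\sigma^{\alpha_1}\circ\tau^{\beta_1}\circ\cdots\circ\sigma^{\alpha_n}\circ\tau^{\beta_n}$ (partial injective map) has domain $A(\zeta)\subseteq s(\zeta)\Lambda$ and range $A(\overline\zeta)$. $\mathcal D^{(0)}_v$ is the set of nonempty $A(\zeta)$, $\zeta\in\mathcal Zv$; $\mathcal A_v$ is the ring of subsets of $v\Lambda$ generated by $\mathcal D^{(0)}_v$. $X_v$ is the set of ultrafilters of $\mathcal A_v$ ($\mathcal U_x$ denoting the ultrafilter $x$), with compact open basic sets $\widehat E=\{x:E\in\mathcal U_x\}$; $X=\bigsqcup_vX_v$, $r(x)=v$ for $x\in X_v$. For $x\in\widehat{A(\zeta)}$, $\Phi_\zeta(x)$ is the ultrafilter of $\mathcal A_{r(\zeta)}$ generated by $\{\varphi_\zeta(E\cap A(\zeta)):E\in\mathcal U_x\}$; $\Phi_\zeta:\widehat{A(\zeta)}\to\widehat{A(\overline\zeta)}$ is a homeomorphism. On $\mathcal Z*X=\{(\zeta,x):s(\zeta)=r(x),\ x\in\widehat{A(\zeta)}\}$: $(\zeta,x)\sim_1(\zeta',x')$ iff $x=x'$ and $\Phi_\zeta|_{\widehat E}=\Phi_{\zeta'}|_{\widehat E}$ for some $E\in\mathcal U_x$; $(\zeta,x)\sim_2(\zeta',x')$ iff $x=x'$ and $\varphi_\zeta|_E=\varphi_{\zeta'}|_E$ for some $E\in\mathcal U_x$. *)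

theory Defs
  imports "HOL-Analysis.Sigma_Algebra"
begin

(* A small category with morphism set M; objects are identified with identity
   morphisms; r = range (codomain), s = source (domain); cmp a b = "a b" is
   defined (meaningful) when s a = r b. *)
definition small_category :: "'a set \<Rightarrow> ('a \<Rightarrow> 'a) \<Rightarrow> ('a \<Rightarrow> 'a) \<Rightarrow> ('a \<Rightarrow> 'a \<Rightarrow> 'a) \<Rightarrow> bool" where
  "small_category M r s cmp \<longleftrightarrow>
     (\<forall>a\<in>M. r a \<in> M \<and> s a \<in> M) \<and>
     (\<forall>a\<in>M. r (r a) = r a \<and> s (r a) = r a \<and> r (s a) = s a \<and> s (s a) = s a) \<and>
     (\<forall>a\<in>M. cmp (r a) a = a \<and> cmp a (s a) = a) \<and>
     (\<forall>a\<in>M. \<forall>b\<in>M. s a = r b \<longrightarrow> cmp a b \<in> M \<and> r (cmp a b) = r a \<and> s (cmp a b) = s b) \<and>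
     (\<forall>a\<in>M. \<forall>b\<in>M. \<forall>c\<in>M. s a = r b \<longrightarrow> s b = r c \<longrightarrow> cmp (cmp a b) c = cmp a (cmp b c))"

definition left_cancellative :: "'a set \<Rightarrow> ('a \<Rightarrow> 'a) \<Rightarrow> ('a \<Rightarrow> 'a) \<Rightarrow> ('a \<Rightarrow> 'a \<Rightarrow> 'a) \<Rightarrow> bool" where
  "left_cancellative M r s cmp \<longleftrightarrow>
     (\<forall>a\<in>M. \<forall>b\<in>M. \<forall>c\<in>M. s a = r b \<longrightarrow> s a = r c \<longrightarrow> cmp a b = cmp a c \<longrightarrow> b = c)"

definition right_cancellative :: "'a set \<Rightarrow> ('a \<Rightarrow> 'a) \<Rightarrow> ('a \<Rightarrow> 'a) \<Rightarrow> ('a \<Rightarrow> 'a \<Rightarrow> 'a) \<Rightarrow> bool" where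
  "right_cancellative M r s cmp \<longleftrightarrow>
     (\<forall>a\<in>M. \<forall>b\<in>M. \<forall>c\<in>M. s b = r a \<longrightarrow> s c = r a \<longrightarrow> cmp b a = cmp c a \<longrightarrow> b = c)"

definition objects :: "'a set \<Rightarrow> ('a \<Rightarrow> 'a) \<Rightarrow> 'a set" where
  "objects M r = {v\<in>M. r v = v}"

definition rangeset :: "'a set \<Rightarrow> ('a \<Rightarrow> 'a) \<Rightarrow> 'a \<Rightarrow> 'a set" where
  "rangeset M r v = {a\<in>M. r a = v}"

definition rightideal :: "'a set \<Rightarrow> ('a \<Rightarrow> 'a) \<Rightarrow> ('a \<Rightarrow> 'a) \<Rightarrow> ('a \<Rightarrow> 'a \<Rightarrow> 'a) \<Rightarrow> 'a \<Rightarrow> 'a set" where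
  "rightideal M r s cmp a = {cmp a b | b. b \<in> M \<and> r b = s a}"

definition tau_map :: "'a set \<Rightarrow> ('a \<Rightarrow> 'a) \<Rightarrow> ('a \<Rightarrow> 'a) \<Rightarrow> ('a \<Rightarrow> 'a \<Rightarrow> 'a) \<Rightarrow> 'a \<Rightarrow> 'a \<Rightarrow> 'a option" where
  "tau_map M r s cmp b x = (if x \<in> M \<and> r x = s b then Some (cmp b x) else None)"

definition sigma_map :: "'a set \<Rightarrow> ('a \<Rightarrow> 'a) \<Rightarrow> ('a \<Rightarrow> 'a) \<Rightarrow> ('a \<Rightarrow> 'a \<Rightarrow> 'a) \<Rightarrow> 'a \<Rightarrow> 'a \<Rightarrow> 'a option" where
  "sigma_map M r s cmp a y =
     (if \<exists>x. x \<in> M \<and> r x = s a \<and> cmp a x = y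
      then Some (THE x. x \<in> M \<and> r x = s a \<and> cmp a x = y) else None)"

(* A zigzag (alpha_1,beta_1,...,alpha_n,beta_n), n >= 1, is represented as the
   list [(alpha_1,beta_1),...,(alpha_n,beta_n)]. *)
fun zz_chain :: "('a \<Rightarrow> 'a) \<Rightarrow> ('a \<times> 'a) list \<Rightarrow> bool" where
  "zz_chain s [] = True"
| "zz_chain s [p] = True"
| "zz_chain s (p # q # rest) = (s (fst q) = s (snd p) \<and> zz_chain s (q # rest))"

definition is_zigzag :: "'a set \<Rightarrow> ('a \<Rightarrow> 'a) \<Rightarrow> ('a \<Rightarrow> 'a) \<Rightarrow> ('a \<times> 'a) list \<Rightarrow> bool" where
  "is_zigzag M r s z \<longleftrightarrow> z \<noteq> [] \<and>
     (\<forall>(a, b)\<in>set z. a \<in> M \<and> b \<in> M \<and> r a = r b) \<and> zz_chain s z"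

definition zz_source :: "('a \<Rightarrow> 'a) \<Rightarrow> ('a \<times> 'a) list \<Rightarrow> 'a" where
  "zz_source s z = s (snd (last z))"

definition zz_range :: "('a \<Rightarrow> 'a) \<Rightarrow> ('a \<times> 'a) list \<Rightarrow> 'a" where
  "zz_range s z = s (fst (hd z))"

(* zigzag map phi_zeta = sigma^{alpha_1} o tau^{beta_1} o ... o sigma^{alpha_n} o tau^{beta_n} *)
fun zz_map :: "'a set \<Rightarrow> ('a \<Rightarrow> 'a) \<Rightarrow> ('a \<Rightarrow> 'a) \<Rightarrow> ('a \<Rightarrow> 'a \<Rightarrow> 'a) \<Rightarrow> ('a \<times> 'a) list \<Rightarrow> 'a \<Rightarrow> 'a option" where
  "zz_map M r s cmp [] x = Some x"
| "zz_map M r s cmp ((a, b) # rest) x =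
     Option.bind (Option.bind (zz_map M r s cmp rest x) (tau_map M r s cmp b)) (sigma_map M r s cmp a)"

definition zz_dom :: "'a set \<Rightarrow> ('a \<Rightarrow> 'a) \<Rightarrow> ('a \<Rightarrow> 'a) \<Rightarrow> ('a \<Rightarrow> 'a \<Rightarrow> 'a) \<Rightarrow> ('a \<times> 'a) list \<Rightarrow> 'a set" where
  "zz_dom M r s cmp z = dom (zz_map M r s cmp z)"

definition D0 :: "'a set \<Rightarrow> ('a \<Rightarrow> 'a) \<Rightarrow> ('a \<Rightarrow> 'a) \<Rightarrow> ('a \<Rightarrow> 'a \<Rightarrow> 'a) \<Rightarrow> 'a \<Rightarrow> 'a set set" where
  "D0 M r s cmp v = {zz_dom M r s cmp z | z. is_zigzag M r s z \<and> zz_source s z = v \<and> zz_dom M r s cmp z \<noteq> {}}"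

definition Aring :: "'a set \<Rightarrow> ('a \<Rightarrow> 'a) \<Rightarrow> ('a \<Rightarrow> 'a) \<Rightarrow> ('a \<Rightarrow> 'a \<Rightarrow> 'a) \<Rightarrow> 'a \<Rightarrow> 'a set set" where
  "Aring M r s cmp v = \<Inter>{R. ring_of_sets (rangeset M r v) R \<and> D0 M r s cmp v \<subseteq> R}"

definition is_filter_in :: "'b set set \<Rightarrow> 'b set set \<Rightarrow> bool" where
  "is_filter_in R U \<longleftrightarrow> U \<subseteq> R \<and> U \<noteq> {} \<and> {} \<notin> U \<and>
     (\<forall>E\<in>U. \<forall>F\<in>U. E \<inter> F \<in> U) \<and> (\<forall>E\<in>U. \<forall>F\<in>R. E \<subseteq> F \<longrightarrow> F \<in> U)"

definition is_ultrafilter_in :: "'b set set \<Rightarrow> 'b set set \<Rightarrow> bool" where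
  "is_ultrafilter_in R U \<longleftrightarrow> is_filter_in R U \<and> (\<forall>U'. is_filter_in R U' \<and> U \<subseteq> U' \<longrightarrow> U' = U)"

definition Xspace :: "'a set \<Rightarrow> ('a \<Rightarrow> 'a) \<Rightarrow> ('a \<Rightarrow> 'a) \<Rightarrow> ('a \<Rightarrow> 'a \<Rightarrow> 'a) \<Rightarrow> ('a \<times> 'a set set) set" where
  "Xspace M r s cmp = {(v, U). v \<in> objects M r \<and> is_ultrafilter_in (Aring M r s cmp v) U}"

definition Phi :: "'a set \<Rightarrow> ('a \<Rightarrow> 'a) \<Rightarrow> ('a \<Rightarrow> 'a) \<Rightarrow> ('a \<Rightarrow> 'a \<Rightarrow> 'a) \<Rightarrow> ('a \<times> 'a) list \<Rightarrow> 'a set set \<Rightarrow> 'a set set" where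
  "Phi M r s cmp z U =
     {F \<in> Aring M r s cmp (zz_range s z).
        \<exists>E\<in>U. {y. \<exists>x\<in>E \<inter> zz_dom M r s cmp z. zz_map M r s cmp z x = Some y} \<subseteq> F}"

definition ZX :: "'a set \<Rightarrow> ('a \<Rightarrow> 'a) \<Rightarrow> ('a \<Rightarrow> 'a) \<Rightarrow> ('a \<Rightarrow> 'a \<Rightarrow> 'a) \<Rightarrow> (('a \<times> 'a) list \<times> ('a \<times> 'a set set)) set" where
  "ZX M r s cmp = {(z, (v, U)). is_zigzag M r s z \<and> (v, U) \<in> Xspace M r s cmp \<and>
                      zz_source s z = v \<and> zz_dom M r s cmp z \<in> U}"

definition sim1 :: "'a set \<Rightarrow> ('a \<Rightarrow> 'a) \<Rightarrow> ('a \<Rightarrow> 'a) \<Rightarrow> ('a \<Rightarrow> 'a \<Rightarrow> 'a) \<Rightarrow>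
    (('a \<times> 'a) list \<times> ('a \<times> 'a set set)) \<Rightarrow> (('a \<times> 'a) list \<times> ('a \<times> 'a set set)) \<Rightarrow> bool" where
  "sim1 M r s cmp p q \<longleftrightarrow> (case p of (z, (v, U)) \<Rightarrow> case q of (z', x') \<Rightarrow>
     x' = (v, U) \<and>
     (\<exists>E\<in>U. E \<subseteq> zz_dom M r s cmp z \<inter> zz_dom M r s cmp z' \<and>
        (\<forall>W. is_ultrafilter_in (Aring M r s cmp v) W \<and> E \<in> W \<longrightarrow>
              Phi M r s cmp z W = Phi M r s cmp z' W)))"

definition sim2 :: "'a set \<Rightarrow> ('a \<Rightarrow> 'a) \<Rightarrow> ('a \<Rightarrow> 'a) \<Rightarrow> ('a \<Rightarrow> 'a \<Rightarrow> 'a) \<Rightarrow>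
    (('a \<times> 'a) list \<times> ('a \<times> 'a set set)) \<Rightarrow> (('a \<times> 'a) list \<times> ('a \<times> 'a set set)) \<Rightarrow> bool" where
  "sim2 M r s cmp p q \<longleftrightarrow> (case p of (z, (v, U)) \<Rightarrow> case q of (z', x') \<Rightarrow>
     x' = (v, U) \<and>
     (\<exists>E\<in>U. E \<subseteq> zz_dom M r s cmp z \<inter> zz_dom M r s cmp z' \<and>
        (\<forall>a\<in>E. zz_map M r s cmp z a = zz_map M r s cmp z' a)))"

end

theory Submission
  imports Defs
begin

definition C2 :: "'a set \<Rightarrow> ('a \<Rightarrow> 'a) \<Rightarrow> ('a \<Rightarrow> 'a) \<Rightarrow> ('a \<Rightarrow> 'a \<Rightarrow> 'a) \<Rightarrow> bool" where
  "C2 M r s cmp \<equiv> (\<forall>v\<in>objects M r. \<forall>E\<in>Aring M r s cmp v. E \<noteq> {} \<longrightarrow>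
                   (\<forall>\<alpha>\<in>E. \<forall>\<mu>\<in>M. \<forall>\<nu>\<in>M.
                      r \<mu> = s \<alpha> \<and> s \<mu> = s \<alpha> \<and> r \<nu> = s \<alpha> \<and> s \<nu> = s \<alpha> \<and>
                      cmp \<mu> \<nu> = s \<alpha> \<and> cmp \<nu> \<mu> = s \<alpha> \<and> \<mu> \<noteq> s \<alpha> \<longrightarrow>
                      (\<exists>\<beta>\<in>M. r \<beta> = s \<alpha> \<and> cmp \<alpha> \<beta> \<in> E \<and>
                         (cmp \<mu> \<beta> \<notin> rightideal M r s cmp \<beta> \<or>
                          cmp \<nu> \<beta> \<notin> rightideal M r s cmp \<beta>))))"

locale lcsc =
  fixes M :: "'a set" and r s :: "'a \<Rightarrow> 'a" and cmp :: "'a \<Rightarrow> 'a \<Rightarrow> 'a"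
  assumes cat: "small_category M r s cmp" and lc: "left_cancellative M r s cmp"
begin

abbreviation "zm \<equiv> zz_map M r s cmp"
abbreviation "zd \<equiv> zz_dom M r s cmp"
abbreviation "RI \<equiv> rightideal M r s cmp"
abbreviation "AR \<equiv> Aring M r s cmp"
abbreviation "VL \<equiv> rangeset M r"

lemma ax1: "\<forall>a\<in>M. r a \<in> M \<and> s a \<in> M"
  using cat unfolding small_category_def by (elim conjE) assumption
lemma ax2: "\<forall>a\<in>M. r (r a) = r a \<and> s (r a) = r a \<and> r (s a) = s a \<and> s (s a) = s a"
  using cat unfolding small_category_def by (elim conjE) assumption
lemma ax3: "\<forall>a\<in>M. cmp (r a) a = a \<and> cmp a (s a) = a"
  using cat unfolding small_category_def by (elim conjE) assumption
lemma ax4: "\<forall>a\<in>M. \<forall>b\<in>M. s a = r b \<longrightarrow> cmp a b \<in> M \<and> r (cmp a b) = r a \<and> s (cmp a b) = s b"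
  using cat unfolding small_category_def by (elim conjE) assumption
lemma ax5: "\<forall>a\<in>M. \<forall>b\<in>M. \<forall>c\<in>M. s a = r b \<longrightarrow> s b = r c \<longrightarrow> cmp (cmp a b) c = cmp a (cmp b c)"
  using cat unfolding small_category_def by (elim conjE) assumption

lemma rM[simp]: "a \<in> M \<Longrightarrow> r a \<in> M" and sM[simp]: "a \<in> M \<Longrightarrow> s a \<in> M"
  using ax1 by blast+
lemma rr[simp]: "a \<in> M \<Longrightarrow> r (r a) = r a" and sr[simp]: "a \<in> M \<Longrightarrow> s (r a) = r a"
  and rs[simp]: "a \<in> M \<Longrightarrow> r (s a) = s a" and ss[simp]: "a \<in> M \<Longrightarrow> s (s a) = s a"
  using ax2 by blast+
lemma idl[simp]: "a \<in> M \<Longrightarrow> cmp (r a) a = a" and idr[simp]: "a \<in> M \<Longrightarrow> cmp a (s a) = a"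
  using ax3 by blast+
lemma cmpM[simp]: "a \<in> M \<Longrightarrow> b \<in> M \<Longrightarrow> s a = r b \<Longrightarrow> cmp a b \<in> M"
  and rcmp[simp]: "a \<in> M \<Longrightarrow> b \<in> M \<Longrightarrow> s a = r b \<Longrightarrow> r (cmp a b) = r a"
  and scmp[simp]: "a \<in> M \<Longrightarrow> b \<in> M \<Longrightarrow> s a = r b \<Longrightarrow> s (cmp a b) = s b"
  using ax4 by blast+
lemma assoc: "a \<in> M \<Longrightarrow> b \<in> M \<Longrightarrow> c \<in> M \<Longrightarrow> s a = r b \<Longrightarrow> s b = r c \<Longrightarrow>
   cmp (cmp a b) c = cmp a (cmp b c)"
  using ax5 by blast
lemma lcax: "\<forall>a\<in>M. \<forall>b\<in>M. \<forall>c\<in>M. s a = r b \<longrightarrow> s a = r c \<longrightarrow> cmp a b = cmp a c \<longrightarrow> b = c"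
  using lc unfolding left_cancellative_def .
lemma cancel[simp]: "a \<in> M \<Longrightarrow> b \<in> M \<Longrightarrow> c \<in> M \<Longrightarrow> s a = r b \<Longrightarrow> s a = r c \<Longrightarrow>
   cmp a b = cmp a c \<longleftrightarrow> b = c"
  using lcax by blast

lemma cancel_id: "a \<in> M \<Longrightarrow> c \<in> M \<Longrightarrow> r c = s a \<Longrightarrow> cmp a c = a \<Longrightarrow> c = s a"
proof -
  assume h: "a \<in> M" "c \<in> M" "r c = s a" "cmp a c = a"
  have "cmp a c = cmp a (s a)" using h(1,4) by simp
  moreover have "s a \<in> M" "r (s a) = s a" using h(1) by auto
  ultimately show "c = s a" using cancel[of a c "s a"] h(1,2,3) by (metis (no_types))
qed

lemma tau_Some: "tau_map M r s cmp b x = Some t \<longleftrightarrow> x \<in> M \<and> r x = s b \<and> t = cmp b x"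
  by (auto simp: tau_map_def)

lemma sigma_Some: assumes "a \<in> M"
  shows "sigma_map M r s cmp a t = Some u \<longleftrightarrow> u \<in> M \<and> r u = s a \<and> cmp a u = t"
proof
  assume h: "sigma_map M r s cmp a t = Some u"
  then obtain x where x: "x \<in> M \<and> r x = s a \<and> cmp a x = t"
    by (auto simp: sigma_map_def split: if_splits)
  have "(THE x. x \<in> M \<and> r x = s a \<and> cmp a x = t) = x"
    using x assms by (intro the_equality) auto
  moreover have "u = (THE x. x \<in> M \<and> r x = s a \<and> cmp a x = t)"
    using h x unfolding sigma_map_def by (metis option.inject option.simps(3))
  ultimately show "u \<in> M \<and> r u = s a \<and> cmp a u = t" using x by simp
next
  assume u: "u \<in> M \<and> r u = s a \<and> cmp a u = t"
  have "(THE x. x \<in> M \<and> r x = s a \<and> cmp a x = t) = u"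
    using u assms by (intro the_equality) auto
  then show "sigma_map M r s cmp a t = Some u" using u by (auto simp: sigma_map_def)
qed

lemma zz_cons: assumes "a \<in> M"
  shows "zm ((a, b) # rest) x = Some y \<longleftrightarrow>
    (\<exists>t. zm rest x = Some t \<and> t \<in> M \<and> r t = s b \<and> y \<in> M \<and> r y = s a \<and> cmp a y = cmp b t)"
  using assms by (auto simp: bind_eq_Some_conv tau_Some sigma_Some)

lemma zz_props: "zm z x = Some y \<Longrightarrow> \<forall>p\<in>set z. fst p \<in> M \<and> snd p \<in> M \<Longrightarrow>
   (z = [] \<longrightarrow> y = x) \<and> (z \<noteq> [] \<longrightarrow> x \<in> M \<and> r x = s (snd (last z)) \<and> y \<in> M \<and>
      r y = s (fst (hd z)) \<and> s y = s x)"
proof (induction z arbitrary: y)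
  case Nil then show ?case by simp
next
  case (Cons p rest)
  obtain a b where p: "p = (a, b)" by force
  have abM: "a \<in> M" "b \<in> M" using Cons.prems p by auto
  from Cons.prems(1) obtain t where t: "zm rest x = Some t" "t \<in> M" "r t = s b" "y \<in> M"
     "r y = s a" "cmp a y = cmp b t"
    unfolding p using zz_cons[OF abM(1)] by blast
  have "s y = s (cmp a y)" using t(4,5) abM by simp
  also have "\<dots> = s (cmp b t)" using t(6) by simp
  also have "\<dots> = s t" using t(2,3) abM by simp
  finally have sy: "s y = s t" .
  show ?case
  proof (cases "rest = []")
    case True
    then have "t = x" using t by simp
    then show ?thesis using t sy True p by auto
  next
    case False
    then have "x \<in> M \<and> r x = s (snd (last rest)) \<and> s t = s x"
      using Cons.IH[OF t(1)] Cons.prems by auto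
    then show ?thesis using t sy False p by auto
  qed
qed

lemma zz_equiv: "zm z x = Some y \<Longrightarrow> \<forall>p\<in>set z. fst p \<in> M \<and> snd p \<in> M \<Longrightarrow>
   x \<in> M \<Longrightarrow> g \<in> M \<Longrightarrow> r g = s x \<Longrightarrow> zm z (cmp x g) = Some (cmp y g)"
proof (induction z arbitrary: y)
  case Nil then show ?case by simp
next
  case (Cons p rest)
  obtain a b where p: "p = (a, b)" by force
  have abM: "a \<in> M" "b \<in> M" using Cons.prems p by auto
  from Cons.prems(1) obtain t where t: "zm rest x = Some t" "t \<in> M" "r t = s b" "y \<in> M"
     "r y = s a" "cmp a y = cmp b t"
    unfolding p using zz_cons[OF abM(1)] by blast
  have "s y = s (cmp a y)" using t(4,5) abM by simp
  also have "\<dots> = s (cmp b t)" using t(6) by simp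
  also have "\<dots> = s t" using t(2,3) abM by simp
  finally have sy: "s y = s t" .
  have st: "s t = s x"
  proof (cases "rest = []")
    case True then show ?thesis using t by simp
  next
    case False then show ?thesis using zz_props[OF t(1)] Cons.prems by auto
  qed
  have IH: "zm rest (cmp x g) = Some (cmp t g)" using Cons.IH[OF t(1)] Cons.prems by auto
  have "cmp a (cmp y g) = cmp (cmp a y) g" using assoc[of a y g] abM t Cons.prems sy st by simp
  also have "\<dots> = cmp (cmp b t) g" using t by simp
  also have "\<dots> = cmp b (cmp t g)" using assoc[of b t g] abM t Cons.prems sy st by simp
  finally have e: "cmp a (cmp y g) = cmp b (cmp t g)" .
  show ?case unfolding p zz_cons[OF abM(1)]
    using IH e t Cons.prems sy st abM by (intro exI[of _ "cmp t g"]) auto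
qed

lemma zig_M: "is_zigzag M r s z \<Longrightarrow> \<forall>p\<in>set z. fst p \<in> M \<and> snd p \<in> M"
  by (auto simp: is_zigzag_def)

lemma dom_props: assumes "is_zigzag M r s z" "x \<in> zd z"
  shows "x \<in> M \<and> r x = zz_source s z \<and> (\<exists>y. zm z x = Some y \<and> y \<in> M \<and> r y = zz_range s z \<and> s y = s x)"
proof -
  obtain y where y: "zm z x = Some y" using assms(2) by (auto simp: zz_dom_def)
  have "z \<noteq> []" using assms(1) by (simp add: is_zigzag_def)
  then show ?thesis using zz_props[OF y zig_M[OF assms(1)]] y
    by (auto simp: zz_source_def zz_range_def)
qed

lemma dom_sub: "is_zigzag M r s z \<Longrightarrow> zd z \<subseteq> VL (zz_source s z)"
  using dom_props by (auto simp: rangeset_def)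

lemma dom_rideal: assumes "is_zigzag M r s z" "x \<in> zd z" "g \<in> M" "r g = s x"
  shows "cmp x g \<in> zd z"
proof -
  obtain y where y: "zm z x = Some y" using assms(2) by (auto simp: zz_dom_def)
  have "x \<in> M" using dom_props assms by blast
  then show ?thesis using zz_equiv[OF y zig_M[OF assms(1)]] assms by (auto simp: zz_dom_def)
qed

lemma D0_sub: "D0 M r s cmp v \<subseteq> Pow (VL v)"
  using dom_sub by (auto simp: D0_def)

lemma AR_ring: "ring_of_sets (VL v) (AR v)"
proof -
  let ?C = "{R. ring_of_sets (VL v) R \<and> D0 M r s cmp v \<subseteq> R}"
  have P: "Pow (VL v) \<in> ?C" using D0_sub by (auto simp: ring_of_sets_iff)
  have "AR v = \<Inter>?C" by (simp add: Aring_def)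
  moreover have "ring_of_sets (VL v) (\<Inter>?C)"
  proof (rule ring_of_sets_iff[THEN iffD2], intro conjI)
    show "\<Inter>?C \<subseteq> Pow (VL v)" using P by blast
    show "{} \<in> \<Inter>?C" by (auto simp: ring_of_sets_iff)
    show "\<forall>a\<in>\<Inter>?C. \<forall>b\<in>\<Inter>?C. a \<union> b \<in> \<Inter>?C" by (auto simp: ring_of_sets_iff)
    show "\<forall>a\<in>\<Inter>?C. \<forall>b\<in>\<Inter>?C. a - b \<in> \<Inter>?C" by (auto simp: ring_of_sets_iff)
  qed
  ultimately show ?thesis by simp
qed

lemma AR_min: "ring_of_sets (VL v) R \<Longrightarrow> D0 M r s cmp v \<subseteq> R \<Longrightarrow> AR v \<subseteq> R"
  by (auto simp: Aring_def)

lemma D0_AR: "D0 M r s cmp v \<subseteq> AR v"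
  by (auto simp: Aring_def)

lemma AR_sub: "F \<in> AR v \<Longrightarrow> F \<subseteq> VL v"
  using AR_ring[of v] by (auto simp: ring_of_sets_iff)

lemma AR_Diff: "F \<in> AR v \<Longrightarrow> G \<in> AR v \<Longrightarrow> F - G \<in> AR v"
  using AR_ring[of v] unfolding ring_of_sets_iff by blast

lemma AR_Int: "F \<in> AR v \<Longrightarrow> G \<in> AR v \<Longrightarrow> F \<inter> G \<in> AR v"
proof -
  assume "F \<in> AR v" "G \<in> AR v"
  then have "F - (F - G) \<in> AR v" using AR_Diff by blast
  moreover have "F - (F - G) = F \<inter> G" by blast
  ultimately show ?thesis by simp
qed

lemma AR_empty: "{} \<in> AR v"
  using AR_ring[of v] unfolding ring_of_sets_iff by blast

lemma zig_in_AR: "is_zigzag M r s z \<Longrightarrow> zd z \<noteq> {} \<Longrightarrow> zd z \<in> AR (zz_source s z)"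
  using D0_AR by (auto simp: D0_def)

lemma RI_zig: assumes "a \<in> M"
  shows "is_zigzag M r s [(a, r a)]" "zz_source s [(a, r a)] = r a" "zd [(a, r a)] = RI a"
    "a \<in> RI a" "RI a \<in> AR (r a)"
proof -
  show z: "is_zigzag M r s [(a, r a)]" using assms by (simp add: is_zigzag_def)
  show so: "zz_source s [(a, r a)] = r a" using assms by (simp add: zz_source_def)
  show ai: "a \<in> RI a" unfolding rightideal_def using assms by (intro CollectI exI[of _ "s a"]) simp
  show d: "zd [(a, r a)] = RI a"
  proof
    show "zd [(a, r a)] \<subseteq> RI a"
    proof
      fix x assume "x \<in> zd [(a, r a)]"
      then obtain y where "zm [(a, r a)] x = Some y" by (auto simp: zz_dom_def)
      then obtain t where t: "x \<in> M" "r x = r a" "t \<in> M" "r t = s a" "cmp a t = cmp (r a) x"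
        using assms unfolding zz_cons[OF assms] by auto
      then have "x = cmp a t" by (metis idl)
      then show "x \<in> RI a" using t unfolding rightideal_def by blast
    qed
    show "RI a \<subseteq> zd [(a, r a)]"
    proof
      fix x assume "x \<in> RI a"
      then obtain b where b: "x = cmp a b" "b \<in> M" "r b = s a" by (auto simp: rightideal_def)
      have "cmp (r a) x = x" using b assms idl[of x] by simp
      then have "zm [(a, r a)] x = Some b" unfolding zz_cons[OF assms] using b assms by simp
      then show "x \<in> zd [(a, r a)]" by (auto simp: zz_dom_def)
    qed
  qed
  show "RI a \<in> AR (r a)" using zig_in_AR[OF z] d so ai by auto
qed

lemma ultra_pt: assumes "y \<in> F0" "F0 \<in> AR v"
  shows "is_ultrafilter_in (AR v) {F \<in> AR v. y \<in> F}"
proof -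
  let ?U = "{F \<in> AR v. y \<in> F}"
  have f: "is_filter_in (AR v) ?U" using assms
    by (auto simp: is_filter_in_def intro: AR_Int)
  have "U' = ?U" if "is_filter_in (AR v) U'" "?U \<subseteq> U'" for U'
  proof
    show "U' \<subseteq> ?U"
    proof
      fix F assume F: "F \<in> U'"
      then have FA: "F \<in> AR v" using that by (auto simp: is_filter_in_def)
      show "F \<in> ?U"
      proof (rule ccontr)
        assume "F \<notin> ?U"
        then have "y \<notin> F" using FA by simp
        then have "F0 - F \<in> ?U" using assms FA AR_Diff by auto
        then have "F0 - F \<in> U'" using that by auto
        moreover have "\<forall>E\<in>U'. \<forall>F\<in>U'. E \<inter> F \<in> U'" "{} \<notin> U'"
          using that(1) unfolding is_filter_in_def by blast+
        moreover have "F \<inter> (F0 - F) = {}" by blast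
        ultimately show False using F by metis
      qed
    qed
  qed (use that in auto)
  then show ?thesis using f by (auto simp: is_ultrafilter_in_def)
qed

lemma inv_closed: assumes F: "F \<in> AR v" and x: "x \<in> M" "\<gamma> \<in> M" "\<delta> \<in> M" "r \<gamma> = s x" "r \<delta> = s \<gamma>"
    "cmp \<gamma> \<delta> = s x"
  shows "cmp x \<gamma> \<in> F \<longleftrightarrow> x \<in> F"
proof -
  define P where "P F \<longleftrightarrow> (\<forall>x \<gamma> \<delta>. x \<in> M \<and> \<gamma> \<in> M \<and> \<delta> \<in> M \<and> r \<gamma> = s x \<and> r \<delta> = s \<gamma> \<and>
      cmp \<gamma> \<delta> = s x \<longrightarrow> (cmp x \<gamma> \<in> F \<longleftrightarrow> x \<in> F))" for F
  let ?R = "{F \<in> Pow (VL v). P F}"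
  have Pi: "cmp x \<gamma> \<in> F \<longleftrightarrow> x \<in> F" if "P F" "x \<in> M" "\<gamma> \<in> M" "\<delta> \<in> M" "r \<gamma> = s x"
     "r \<delta> = s \<gamma>" "cmp \<gamma> \<delta> = s x" for F x \<gamma> \<delta>
    using that unfolding P_def by blast
  have PI: "P F" if "\<And>x \<gamma> \<delta>. x \<in> M \<Longrightarrow> \<gamma> \<in> M \<Longrightarrow> \<delta> \<in> M \<Longrightarrow> r \<gamma> = s x \<Longrightarrow>
     r \<delta> = s \<gamma> \<Longrightarrow> cmp \<gamma> \<delta> = s x \<Longrightarrow> (cmp x \<gamma> \<in> F \<longleftrightarrow> x \<in> F)" for F
    using that unfolding P_def by blast
  have PUn: "P (a \<union> b)" if "P a" "P b" for a b
  proof (rule PI)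
    fix x \<gamma> \<delta> assume h: "x \<in> M" "\<gamma> \<in> M" "\<delta> \<in> M" "r \<gamma> = s x" "r \<delta> = s \<gamma>" "cmp \<gamma> \<delta> = s x"
    show "cmp x \<gamma> \<in> a \<union> b \<longleftrightarrow> x \<in> a \<union> b" using Pi[OF that(1) h] Pi[OF that(2) h] by blast
  qed
  have PDiff: "P (a - b)" if "P a" "P b" for a b
  proof (rule PI)
    fix x \<gamma> \<delta> assume h: "x \<in> M" "\<gamma> \<in> M" "\<delta> \<in> M" "r \<gamma> = s x" "r \<delta> = s \<gamma>" "cmp \<gamma> \<delta> = s x"
    show "cmp x \<gamma> \<in> a - b \<longleftrightarrow> x \<in> a - b" using Pi[OF that(1) h] Pi[OF that(2) h] by blast
  qed
  have P0: "P {}" by (rule PI) simp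
  have ring: "ring_of_sets (VL v) ?R"
    unfolding ring_of_sets_iff using PUn PDiff P0 by blast
  have "D0 M r s cmp v \<subseteq> ?R"
  proof
    fix D assume "D \<in> D0 M r s cmp v"
    then obtain z where z: "is_zigzag M r s z" "zz_source s z = v" "D = zd z"
      by (auto simp: D0_def)
    have "P D"
    proof (rule PI)
      fix x \<gamma> \<delta> assume h0: "x \<in> M" "\<gamma> \<in> M" "\<delta> \<in> M" "r \<gamma> = s x" "r \<delta> = s \<gamma>" "cmp \<gamma> \<delta> = s x"
      then have h: "x \<in> M \<and> \<gamma> \<in> M \<and> \<delta> \<in> M \<and> r \<gamma> = s x \<and> r \<delta> = s \<gamma> \<and> cmp \<gamma> \<delta> = s x" by simp
      show "cmp x \<gamma> \<in> D \<longleftrightarrow> x \<in> D"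
      proof
        assume "cmp x \<gamma> \<in> D"
        then have "cmp (cmp x \<gamma>) \<delta> \<in> D" using dom_rideal[OF z(1)] z(3) h by simp
        moreover have "cmp (cmp x \<gamma>) \<delta> = x" using assoc[of x \<gamma> \<delta>] h by simp
        ultimately show "x \<in> D" by simp
      next
        assume "x \<in> D" then show "cmp x \<gamma> \<in> D" using dom_rideal[OF z(1)] z(3) h by simp
      qed
    qed
    then show "D \<in> ?R" using D0_sub \<open>D \<in> D0 M r s cmp v\<close> by auto
  qed
  then have "AR v \<subseteq> ?R" using AR_min[OF ring] by blast
  then show ?thesis using F x Pi by blast
qed

lemma pw: assumes z: "is_zigzag M r s z" and z': "is_zigzag M r s z'"
  and v: "zz_source s z = v" and E: "E \<in> AR v" "E \<subseteq> zd z \<inter> zd z'"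
  and H: "\<forall>W. is_ultrafilter_in (AR v) W \<and> E \<in> W \<longrightarrow> Phi M r s cmp z W = Phi M r s cmp z' W"
  and y: "y \<in> E" and a: "zm z y = Some a" and b: "zm z' y = Some b"
  shows "b \<in> RI a"
proof -
  let ?W = "{F \<in> AR v. y \<in> F}"
  have W: "is_ultrafilter_in (AR v) ?W" using ultra_pt[OF y E(1)] .
  have yd: "y \<in> zd z" "y \<in> zd z'" using y E by auto
  obtain a' where a': "zm z y = Some a'" "a' \<in> M" "r a' = zz_range s z" "s a' = s y"
    and yM: "y \<in> M" "r y = v" using dom_props[OF z yd(1)] v by blast
  have aa: "a' = a" using a a' by simp
  have RIy: "RI y \<in> W" if "W = ?W" for W
    using RI_zig[OF yM(1)] yM that by auto
  have "RI a \<in> Phi M r s cmp z ?W"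
    unfolding Phi_def
  proof (rule CollectI, rule conjI)
    show "RI a \<in> AR (zz_range s z)" using RI_zig[of a] a' aa by auto
    have "{c. \<exists>x\<in>RI y \<inter> zd z. zm z x = Some c} \<subseteq> RI a"
    proof
      fix c assume "c \<in> {c. \<exists>x\<in>RI y \<inter> zd z. zm z x = Some c}"
      then obtain x where x: "x \<in> RI y" "zm z x = Some c" by blast
      then obtain g where g: "x = cmp y g" "g \<in> M" "r g = s y" by (auto simp: rightideal_def)
      have "zm z x = Some (cmp a g)" using zz_equiv[OF a zig_M[OF z] yM(1) g(2,3)] g(1) by simp
      then have "c = cmp a g" using x by simp
      then show "c \<in> RI a" using g a' aa unfolding rightideal_def by auto
    qed
    moreover have "RI y \<in> ?W" using RIy by blast
    ultimately show "\<exists>E\<in>?W. {c. \<exists>x\<in>E \<inter> zd z. zm z x = Some c} \<subseteq> RI a" by blast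
  qed
  then have "RI a \<in> Phi M r s cmp z' ?W" using H W y E by auto
  then obtain E' where E': "E' \<in> ?W" "{c. \<exists>x\<in>E' \<inter> zd z'. zm z' x = Some c} \<subseteq> RI a"
    unfolding Phi_def by blast
  then have "y \<in> E' \<inter> zd z'" using yd by auto
  then show ?thesis using E'(2) b by blast
qed

lemma Phi_sub: assumes "zz_range s z = zz_range s z'" "is_filter_in (AR v) W" "E \<in> W"
   "E \<subseteq> zd z \<inter> zd z'" "\<forall>a\<in>E. zm z a = zm z' a"
  shows "Phi M r s cmp z W \<subseteq> Phi M r s cmp z' W"
proof
  fix F assume "F \<in> Phi M r s cmp z W"
  then obtain E' where F: "F \<in> AR (zz_range s z)" "E' \<in> W"
     "{y. \<exists>x\<in>E' \<inter> zd z. zm z x = Some y} \<subseteq> F" unfolding Phi_def by blast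
  have "E' \<inter> E \<in> W" using assms(2,3) F(2) by (auto simp: is_filter_in_def)
  moreover have "{y. \<exists>x\<in>(E' \<inter> E) \<inter> zd z'. zm z' x = Some y} \<subseteq> F"
  proof
    fix c assume "c \<in> {y. \<exists>x\<in>(E' \<inter> E) \<inter> zd z'. zm z' x = Some y}"
    then obtain x where x: "x \<in> E'" "x \<in> E" "zm z' x = Some c" by blast
    then have "zm z x = Some c" "x \<in> zd z" using assms(4,5) by auto
    then show "c \<in> F" using F(3) x(1) by blast
  qed
  moreover have "F \<in> AR (zz_range s z')" using F(1) assms(1) by simp
  ultimately show "F \<in> Phi M r s cmp z' W" unfolding Phi_def by blast
qed

lemma eq_on_E: assumes C: "C2 M r s cmp" and vo: "v \<in> objects M r"
  and z: "is_zigzag M r s z" and z': "is_zigzag M r s z'"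
  and v: "zz_source s z = v" "zz_source s z' = v" and E: "E \<in> AR v" "E \<subseteq> zd z \<inter> zd z'"
  and H: "\<forall>W. is_ultrafilter_in (AR v) W \<and> E \<in> W \<longrightarrow> Phi M r s cmp z W = Phi M r s cmp z' W"
  and y: "y \<in> E"
  shows "zm z y = zm z' y"
proof -
  have H': "\<forall>W. is_ultrafilter_in (AR v) W \<and> E \<in> W \<longrightarrow> Phi M r s cmp z' W = Phi M r s cmp z W"
    using H by metis
  have E': "E \<subseteq> zd z' \<inter> zd z" using E by auto
  have PW: "b \<in> RI a \<and> a \<in> RI b" if "x \<in> E" "zm z x = Some a" "zm z' x = Some b" for x a b
    using pw[OF z z' v(1) E H that] pw[OF z' z v(2) E(1) E' H' that(1) that(3) that(2)] by blast
  have yd: "y \<in> zd z" "y \<in> zd z'" using y E by auto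
  obtain a where a: "zm z y = Some a" "a \<in> M" "s a = s y"
    and yM: "y \<in> M" "r y = v" using dom_props[OF z yd(1)] v by blast
  obtain b where b: "zm z' y = Some b" "b \<in> M" "s b = s y" using dom_props[OF z' yd(2)] by blast
  show ?thesis
  proof (rule ccontr)
    assume ne: "zm z y \<noteq> zm z' y"
    then have ab: "a \<noteq> b" using a b by simp
    obtain \<gamma> where g: "b = cmp a \<gamma>" "\<gamma> \<in> M" "r \<gamma> = s a"
      using PW[OF y a(1) b(1)] by (auto simp: rightideal_def)
    obtain \<delta> where d: "a = cmp b \<delta>" "\<delta> \<in> M" "r \<delta> = s b"
      using PW[OF y a(1) b(1)] by (auto simp: rightideal_def)
    have sg: "s \<gamma> = s y" using scmp[OF a(2) g(2) g(3)[symmetric]] g(1) b(3) by simp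
    have sd: "s \<delta> = s y" using scmp[OF b(2) d(2) d(3)[symmetric]] d(1) a(3) by simp
    have A1: "cmp (cmp a \<gamma>) \<delta> = cmp a (cmp \<gamma> \<delta>)"
      by (rule assoc) (use a(2,3) b(3) g(2,3) d(2,3) sg in auto)
    have "cmp a (cmp \<gamma> \<delta>) = a" using A1 g(1) d(1) by metis
    then have gd: "cmp \<gamma> \<delta> = s y"
      using cancel_id[OF a(2), of "cmp \<gamma> \<delta>"] a(3) b(3) g(2,3) d(2,3) sg by simp
    have A2: "cmp (cmp b \<delta>) \<gamma> = cmp b (cmp \<delta> \<gamma>)"
      by (rule assoc) (use a(2,3) b(2,3) g(2,3) d(2,3) sd in auto)
    have "cmp b (cmp \<delta> \<gamma>) = b" using A2 g(1) d(1) by metis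
    then have dg: "cmp \<delta> \<gamma> = s y"
      using cancel_id[OF b(2), of "cmp \<delta> \<gamma>"] a(3) b(3) g(2,3) d(2,3) sd by simp
    have gne: "\<gamma> \<noteq> s y"
    proof
      assume "\<gamma> = s y"
      then have "b = cmp a (s a)" using g(1) a(3) by simp
      then show False using ab a(2) by simp
    qed
    have "E \<noteq> {}" using y by auto
    then obtain \<beta> where \<beta>: "\<beta> \<in> M" "r \<beta> = s y" "cmp y \<beta> \<in> E"
      "cmp \<gamma> \<beta> \<notin> RI \<beta> \<or> cmp \<delta> \<beta> \<notin> RI \<beta>"
    proof -
      have cj: "r \<gamma> = s y \<and> s \<gamma> = s y \<and> r \<delta> = s y \<and> s \<delta> = s y \<and>
                      cmp \<gamma> \<delta> = s y \<and> cmp \<delta> \<gamma> = s y \<and> \<gamma> \<noteq> s y"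
        using g(3) d(3) a(3) b(3) sg sd gd dg gne by simp
      have "\<exists>\<beta>\<in>M. r \<beta> = s y \<and> cmp y \<beta> \<in> E \<and> (cmp \<gamma> \<beta> \<notin> RI \<beta> \<or> cmp \<delta> \<beta> \<notin> RI \<beta>)"
        using C[unfolded C2_def, rule_format, OF vo E(1) \<open>E \<noteq> {}\<close> y g(2) d(2) cj] .
      then show ?thesis using that by blast
    qed
    have za: "zm z (cmp y \<beta>) = Some (cmp a \<beta>)" using zz_equiv[OF a(1) zig_M[OF z] yM(1) \<beta>(1,2)] .
    have zb: "zm z' (cmp y \<beta>) = Some (cmp b \<beta>)" using zz_equiv[OF b(1) zig_M[OF z'] yM(1) \<beta>(1,2)] .
    have P: "cmp b \<beta> \<in> RI (cmp a \<beta>) \<and> cmp a \<beta> \<in> RI (cmp b \<beta>)" using PW[OF \<beta>(3) za zb] .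
    obtain g' where g': "cmp b \<beta> = cmp (cmp a \<beta>) g'" "g' \<in> M" "r g' = s \<beta>"
      using P a \<beta> by (auto simp: rightideal_def)
    obtain d' where d': "cmp a \<beta> = cmp (cmp b \<beta>) d'" "d' \<in> M" "r d' = s \<beta>"
      using P b \<beta> by (auto simp: rightideal_def)
    have "cmp a (cmp \<gamma> \<beta>) = cmp a (cmp \<beta> g')"
    proof -
      have "cmp a (cmp \<gamma> \<beta>) = cmp b \<beta>" using assoc[of a \<gamma> \<beta>] g a \<beta> sg by simp
      also have "\<dots> = cmp a (cmp \<beta> g')" using g' assoc[of a \<beta> g'] a \<beta> by simp
      finally show ?thesis .
    qed
    then have "cmp \<gamma> \<beta> = cmp \<beta> g'" using g a \<beta> g' sg by simp
    then have c1: "cmp \<gamma> \<beta> \<in> RI \<beta>" using g' unfolding rightideal_def by auto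
    have "cmp b (cmp \<delta> \<beta>) = cmp b (cmp \<beta> d')"
    proof -
      have "cmp b (cmp \<delta> \<beta>) = cmp a \<beta>" using assoc[of b \<delta> \<beta>] d b \<beta> sd by simp
      also have "\<dots> = cmp b (cmp \<beta> d')" using d' assoc[of b \<beta> d'] b \<beta> by simp
      finally show ?thesis .
    qed
    then have "cmp \<delta> \<beta> = cmp \<beta> d'" using d b \<beta> d' sd by simp
    then have c2: "cmp \<delta> \<beta> \<in> RI \<beta>" using d' unfolding rightideal_def by auto
    show False using c1 c2 \<beta>(4) by blast
  qed
qed

lemma sim2_sim1: assumes p: "p \<in> ZX M r s cmp" and q: "q \<in> ZX M r s cmp"
  and h: "sim2 M r s cmp p q"
  shows "sim1 M r s cmp p q"
proof -
  obtain z v U where pz: "p = (z, (v, U))" by (metis prod.exhaust)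
  obtain z' x' where qz: "q = (z', x')" by (metis prod.exhaust)
  have z: "is_zigzag M r s z" "is_ultrafilter_in (AR v) U" "zz_source s z = v"
    using p pz by (auto simp: ZX_def Xspace_def)
  from h obtain E where x': "x' = (v, U)" and E: "E \<in> U" "E \<subseteq> zd z \<inter> zd z'"
     "\<forall>a\<in>E. zm z a = zm z' a"
    unfolding sim2_def pz qz by auto
  have z': "is_zigzag M r s z'" using q qz by (auto simp: ZX_def)
  have "{} \<notin> U" using z(2) by (auto simp: is_ultrafilter_in_def is_filter_in_def)
  then obtain a0 where a0: "a0 \<in> E" using E(1) by (metis ex_in_conv)
  obtain y0 where y0: "zm z a0 = Some y0" "r y0 = zz_range s z"
    using dom_props[OF z(1)] a0 E(2) by blast
  obtain y1 where y1: "zm z' a0 = Some y1" "r y1 = zz_range s z'"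
    using dom_props[OF z'] a0 E(2) by blast
  have rng: "zz_range s z = zz_range s z'" using y0 y1 E(3) a0 by simp
  have E': "E \<subseteq> zd z' \<inter> zd z" "\<forall>a\<in>E. zm z' a = zm z a" using E by auto
  have "Phi M r s cmp z W = Phi M r s cmp z' W" if "is_ultrafilter_in (AR v) W" "E \<in> W" for W
  proof -
    have f: "is_filter_in (AR v) W" using that by (simp add: is_ultrafilter_in_def)
    show ?thesis using Phi_sub[OF rng f that(2) E(2,3)] Phi_sub[OF rng[symmetric] f that(2) E'] by blast
  qed
  then show ?thesis unfolding sim1_def pz qz x' using E by auto
qed

lemma sim1_sim2: assumes C: "C2 M r s cmp" and p: "p \<in> ZX M r s cmp" and q: "q \<in> ZX M r s cmp"
  and h: "sim1 M r s cmp p q"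
  shows "sim2 M r s cmp p q"
proof -
  obtain z v U where pz: "p = (z, (v, U))" by (metis prod.exhaust)
  obtain z' x' where qz: "q = (z', x')" by (metis prod.exhaust)
  have z: "is_zigzag M r s z" "is_ultrafilter_in (AR v) U" "zz_source s z = v" "v \<in> objects M r"
    using p pz by (auto simp: ZX_def Xspace_def)
  from h obtain E where x': "x' = (v, U)" and E: "E \<in> U" "E \<subseteq> zd z \<inter> zd z'"
     and H: "\<forall>W. is_ultrafilter_in (AR v) W \<and> E \<in> W \<longrightarrow> Phi M r s cmp z W = Phi M r s cmp z' W"
    unfolding sim1_def pz qz by auto
  have z': "is_zigzag M r s z'" "zz_source s z' = v" using q qz x' by (auto simp: ZX_def)
  have EA: "E \<in> AR v" using z(2) E(1) by (auto simp: is_ultrafilter_in_def is_filter_in_def)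
  have "\<forall>a\<in>E. zm z a = zm z' a"
    using eq_on_E[OF C z(4) z(1) z'(1) z(3) z'(2) EA E(2) H] by blast
  then show ?thesis unfolding sim2_def pz qz x' using E by auto
qed

lemma idv: "y \<in> M \<Longrightarrow> r y = v \<Longrightarrow> cmp v y = y"
  using idl[of y] by simp

lemma dirB: assumes vo: "v \<in> objects M r" and E: "E \<in> AR v" and al: "\<alpha> \<in> E"
  and mu: "\<mu> \<in> M" and nu: "\<nu> \<in> M"
  and c: "r \<mu> = s \<alpha>" "s \<mu> = s \<alpha>" "r \<nu> = s \<alpha>" "s \<nu> = s \<alpha>" "cmp \<mu> \<nu> = s \<alpha>" "\<mu> \<noteq> s \<alpha>"
  and H: "\<forall>\<beta>\<in>M. r \<beta> = s \<alpha> \<and> cmp \<alpha> \<beta> \<in> E \<longrightarrow> cmp \<mu> \<beta> \<in> RI \<beta> \<and> cmp \<nu> \<beta> \<in> RI \<beta>"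
  shows "\<exists>p\<in>ZX M r s cmp. \<exists>q\<in>ZX M r s cmp. \<not> (sim1 M r s cmp p q \<longleftrightarrow> sim2 M r s cmp p q)"
proof -
  have vM: "v \<in> M" "r v = v" using vo by (auto simp: objects_def)
  have sv: "s v = v" using vM sr[of v] by simp
  have alM: "\<alpha> \<in> M" "r \<alpha> = v" using AR_sub[OF E] al by (auto simp: rangeset_def)
  define z1 where "z1 = [(v, v)]"
  define z2 where "z2 = [(v, cmp \<alpha> \<mu>), (\<alpha>, v)]"
  have amM: "cmp \<alpha> \<mu> \<in> M" "r (cmp \<alpha> \<mu>) = v" "s (cmp \<alpha> \<mu>) = s \<alpha>" using alM mu c by auto
  have z1z: "is_zigzag M r s z1" using vM unfolding z1_def is_zigzag_def by simp
  have z2z: "is_zigzag M r s z2" using vM alM amM unfolding z2_def is_zigzag_def by simp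
  have z1s: "zz_source s z1 = v" "zz_range s z1 = v" using sv by (auto simp: z1_def zz_source_def zz_range_def)
  have z2s: "zz_source s z2 = v" "zz_range s z2 = v" using sv by (auto simp: z2_def zz_source_def zz_range_def)
  have z1m: "zm z1 x = Some y \<longleftrightarrow> x \<in> M \<and> r x = v \<and> y = x" for x y
    unfolding z1_def zz_cons[OF vM(1)] using vM sv idv by auto
  have z2i: "zm [(\<alpha>, v)] (cmp \<alpha> \<beta>) = Some \<beta>" if "\<beta> \<in> M" "r \<beta> = s \<alpha>" for \<beta>
    unfolding zz_cons[OF alM(1)] using that alM vM sv idv by simp
  have z2m: "zm z2 (cmp \<alpha> \<beta>) = Some (cmp (cmp \<alpha> \<mu>) \<beta>)" if "\<beta> \<in> M" "r \<beta> = s \<alpha>" for \<beta>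
    unfolding z2_def zz_cons[OF vM(1)] using z2i[OF that] that amM vM sv idv by simp
  have z2d: "zd z2 = RI \<alpha>"
  proof
    show "zd z2 \<subseteq> RI \<alpha>"
    proof
      fix x assume "x \<in> zd z2"
      then obtain y where "zm z2 x = Some y" by (auto simp: zz_dom_def)
      then obtain t where "zm [(\<alpha>, v)] x = Some t" unfolding z2_def zz_cons[OF vM(1)] by blast
      then obtain t' where t': "x \<in> M" "r x = v" "t' \<in> M" "r t' = s \<alpha>" "cmp \<alpha> t' = cmp v x"
        unfolding zz_cons[OF alM(1)] using sv by auto
      then have "x = cmp \<alpha> t'" using idv by simp
      then show "x \<in> RI \<alpha>" using t' unfolding rightideal_def by blast
    qed
    show "RI \<alpha> \<subseteq> zd z2"
    proof
      fix x assume "x \<in> RI \<alpha>"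
      then obtain \<beta> where "x = cmp \<alpha> \<beta>" "\<beta> \<in> M" "r \<beta> = s \<alpha>" by (auto simp: rightideal_def)
      then show "x \<in> zd z2" using z2m by (auto simp: zz_dom_def)
    qed
  qed
  have z1d: "zd z1 = VL v" using z1m by (auto simp: zz_dom_def rangeset_def)
  let ?U = "{F \<in> AR v. \<alpha> \<in> F}"
  have Uu: "is_ultrafilter_in (AR v) ?U" using ultra_pt[OF al E] .
  have RIa: "RI \<alpha> \<in> AR v" "\<alpha> \<in> RI \<alpha>" using RI_zig[OF alM(1)] alM by auto
  have alVL: "\<alpha> \<in> VL v" using alM by (simp add: rangeset_def)
  have VLv: "VL v \<in> AR v" using zig_in_AR[OF z1z] z1d z1s alVL by auto
  have pZX: "(z1, (v, ?U)) \<in> ZX M r s cmp"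
    unfolding ZX_def Xspace_def using z1z vo Uu z1s z1d VLv alVL by auto
  have qZX: "(z2, (v, ?U)) \<in> ZX M r s cmp"
    unfolding ZX_def Xspace_def using z2z vo Uu z2s z2d RIa by auto
  define E0 where "E0 = E \<inter> RI \<alpha>"
  have E0: "E0 \<in> AR v" "\<alpha> \<in> E0" using AR_Int[OF E RIa(1)] al RIa(2) by (auto simp: E0_def)
  have key: "\<exists>y. zm z2 x = Some y \<and> (\<forall>F\<in>AR v. y \<in> F \<longleftrightarrow> x \<in> F)" if x: "x \<in> E0" for x
  proof -
    obtain \<beta> where b: "x = cmp \<alpha> \<beta>" "\<beta> \<in> M" "r \<beta> = s \<alpha>" using x by (auto simp: E0_def rightideal_def)
    have "cmp \<alpha> \<beta> \<in> E" using x b by (simp add: E0_def)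
    then have "cmp \<mu> \<beta> \<in> RI \<beta>" "cmp \<nu> \<beta> \<in> RI \<beta>" using H b by auto
    then obtain \<gamma> \<delta> where g: "cmp \<mu> \<beta> = cmp \<beta> \<gamma>" "\<gamma> \<in> M" "r \<gamma> = s \<beta>"
      and d: "cmp \<nu> \<beta> = cmp \<beta> \<delta>" "\<delta> \<in> M" "r \<delta> = s \<beta>" by (auto simp: rightideal_def)
    have sg: "s \<gamma> = s \<beta>"
    proof -
      have "s \<gamma> = s (cmp \<beta> \<gamma>)" using g(2,3) b(2) by simp
      also have "\<dots> = s (cmp \<mu> \<beta>)" using g(1) by simp
      also have "\<dots> = s \<beta>" using mu c b by simp
      finally show ?thesis .
    qed
    have "cmp \<beta> (cmp \<gamma> \<delta>) = \<beta>"
    proof -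
      have "cmp \<beta> (cmp \<gamma> \<delta>) = cmp (cmp \<beta> \<gamma>) \<delta>" using assoc[of \<beta> \<gamma> \<delta>] b g d sg by simp
      also have "\<dots> = cmp (cmp \<mu> \<beta>) \<delta>" using g(1) by simp
      also have "\<dots> = cmp \<mu> (cmp \<beta> \<delta>)" using assoc[of \<mu> \<beta> \<delta>] b d mu c by simp
      also have "\<dots> = cmp \<mu> (cmp \<nu> \<beta>)" using d(1) by simp
      also have "\<dots> = cmp (cmp \<mu> \<nu>) \<beta>" using assoc[of \<mu> \<nu> \<beta>] b mu nu c by simp
      also have "\<dots> = \<beta>" using c(5) b idl[of \<beta>] by simp
      finally show ?thesis .
    qed
    then have gd: "cmp \<gamma> \<delta> = s \<beta>" using cancel_id[OF b(2), of "cmp \<gamma> \<delta>"] g d sg by simp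
    have y: "cmp (cmp \<alpha> \<mu>) \<beta> = cmp x \<gamma>"
    proof -
      have "cmp (cmp \<alpha> \<mu>) \<beta> = cmp \<alpha> (cmp \<mu> \<beta>)" using assoc[of \<alpha> \<mu> \<beta>] alM mu c b by simp
      also have "\<dots> = cmp \<alpha> (cmp \<beta> \<gamma>)" using g(1) by simp
      also have "\<dots> = cmp (cmp \<alpha> \<beta>) \<gamma>" using assoc[of \<alpha> \<beta> \<gamma>] alM b g by simp
      finally show ?thesis using b(1) by simp
    qed
    have xM: "x \<in> M" "s x = s \<beta>" using b alM by auto
    have "\<forall>F\<in>AR v. cmp x \<gamma> \<in> F \<longleftrightarrow> x \<in> F"
      using inv_closed[OF _ xM(1) g(2) d(2)] g d sg gd xM by simp
    then show ?thesis using z2m[OF b(2,3)] b(1) y by auto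
  qed
  have Phi1: "Phi M r s cmp z1 W = W" if W: "is_filter_in (AR v) W" for W
  proof -
    have img: "{y. \<exists>x\<in>E' \<inter> zd z1. zm z1 x = Some y} = E'" if "E' \<in> W" for E'
    proof -
      have "E' \<subseteq> VL v" using that W AR_sub by (auto simp: is_filter_in_def)
      then show ?thesis using z1m z1d by (auto simp: rangeset_def)
    qed
    show ?thesis
    proof
      show "Phi M r s cmp z1 W \<subseteq> W"
      proof
        fix F assume "F \<in> Phi M r s cmp z1 W"
        then obtain E' where "F \<in> AR v" "E' \<in> W" "{y. \<exists>x\<in>E' \<inter> zd z1. zm z1 x = Some y} \<subseteq> F"
          unfolding Phi_def z1s by blast
        then show "F \<in> W" using img W by (auto simp: is_filter_in_def)
      qed
      show "W \<subseteq> Phi M r s cmp z1 W"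
      proof
        fix F assume F: "F \<in> W"
        then have "F \<in> AR v" using W by (auto simp: is_filter_in_def)
        then show "F \<in> Phi M r s cmp z1 W" unfolding Phi_def z1s using img[OF F] F by auto
      qed
    qed
  qed
  have Phi2: "Phi M r s cmp z2 W = W" if W: "is_filter_in (AR v) W" "E0 \<in> W" for W
  proof
    show "Phi M r s cmp z2 W \<subseteq> W"
    proof
      fix F assume "F \<in> Phi M r s cmp z2 W"
      then obtain E' where F: "F \<in> AR v" "E' \<in> W" "{y. \<exists>x\<in>E' \<inter> zd z2. zm z2 x = Some y} \<subseteq> F"
        unfolding Phi_def z2s by blast
      have "E' \<inter> E0 \<subseteq> F"
      proof
        fix x assume x: "x \<in> E' \<inter> E0"
        then obtain y where y: "zm z2 x = Some y" "\<forall>F\<in>AR v. y \<in> F \<longleftrightarrow> x \<in> F" using key by blast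
        then have "x \<in> zd z2" by (auto simp: zz_dom_def)
        then have "y \<in> F" using F(3) x y(1) by blast
        then show "x \<in> F" using y(2) F(1) by blast
      qed
      moreover have "E' \<inter> E0 \<in> W" using W F(2) by (auto simp: is_filter_in_def)
      ultimately show "F \<in> W" using W F(1) by (auto simp: is_filter_in_def)
    qed
    show "W \<subseteq> Phi M r s cmp z2 W"
    proof
      fix F assume F: "F \<in> W"
      then have FA: "F \<in> AR v" using W by (auto simp: is_filter_in_def)
      have "F \<inter> E0 \<in> W" using W F by (auto simp: is_filter_in_def)
      moreover have "{y. \<exists>x\<in>(F \<inter> E0) \<inter> zd z2. zm z2 x = Some y} \<subseteq> F"
      proof
        fix y assume "y \<in> {y. \<exists>x\<in>(F \<inter> E0) \<inter> zd z2. zm z2 x = Some y}"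
        then obtain x where x: "x \<in> F" "x \<in> E0" "zm z2 x = Some y" by blast
        then obtain y' where "zm z2 x = Some y'" "\<forall>F\<in>AR v. y' \<in> F \<longleftrightarrow> x \<in> F" using key by blast
        then show "y \<in> F" using x FA by auto
      qed
      ultimately show "F \<in> Phi M r s cmp z2 W" unfolding Phi_def z2s using FA by blast
    qed
  qed
  have E0d: "E0 \<subseteq> zd z1 \<inter> zd z2" using AR_sub[OF E] z1d z2d by (auto simp: E0_def)
  have s1: "sim1 M r s cmp (z1, (v, ?U)) (z2, (v, ?U))"
    unfolding sim1_def using E0 E0d Phi1 Phi2 by (auto simp: is_ultrafilter_in_def)
  have ne: "cmp \<alpha> \<mu> \<noteq> \<alpha>"
  proof
    assume "cmp \<alpha> \<mu> = \<alpha>"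
    then have "\<mu> = s \<alpha>" using cancel_id[OF alM(1) mu] c by simp
    then show False using c by simp
  qed
  have s2: "\<not> sim2 M r s cmp (z1, (v, ?U)) (z2, (v, ?U))"
  proof
    assume "sim2 M r s cmp (z1, (v, ?U)) (z2, (v, ?U))"
    then obtain E' where "E' \<in> ?U" "\<forall>a\<in>E'. zm z1 a = zm z2 a" unfolding sim2_def by auto
    then have "zm z1 \<alpha> = zm z2 \<alpha>" by auto
    moreover have "zm z1 \<alpha> = Some \<alpha>" using z1m alM by simp
    moreover have "zm z2 \<alpha> = Some (cmp \<alpha> \<mu>)" using z2m[of "s \<alpha>"] alM amM idr[of "cmp \<alpha> \<mu>"] by simp
    ultimately show False using ne by simp
  qed
  show ?thesis using pZX qZX s1 s2 by blast
qed

end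


theorem mainTheorem8:
  fixes M :: "'a set" and r s :: "'a \<Rightarrow> 'a" and cmp :: "'a \<Rightarrow> 'a \<Rightarrow> 'a"
  assumes cat: "small_category M r s cmp"
    and lc: "left_cancellative M r s cmp"
  defines "cond1 \<equiv> (\<forall>p\<in>ZX M r s cmp. \<forall>q\<in>ZX M r s cmp.
                       sim1 M r s cmp p q \<longleftrightarrow> sim2 M r s cmp p q)"
    and "cond2 \<equiv> (\<forall>v\<in>objects M r. \<forall>E\<in>Aring M r s cmp v. E \<noteq> {} \<longrightarrow>
                   (\<forall>\<alpha>\<in>E. \<forall>\<mu>\<in>M. \<forall>\<nu>\<in>M.
                      r \<mu> = s \<alpha> \<and> s \<mu> = s \<alpha> \<and> r \<nu> = s \<alpha> \<and> s \<nu> = s \<alpha> \<and>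
                      cmp \<mu> \<nu> = s \<alpha> \<and> cmp \<nu> \<mu> = s \<alpha> \<and> \<mu> \<noteq> s \<alpha> \<longrightarrow>
                      (\<exists>\<beta>\<in>M. r \<beta> = s \<alpha> \<and> cmp \<alpha> \<beta> \<in> E \<and>
                         (cmp \<mu> \<beta> \<notin> rightideal M r s cmp \<beta> \<or>
                          cmp \<nu> \<beta> \<notin> rightideal M r s cmp \<beta>))))"
  shows "(cond2 \<longrightarrow> cond1) \<and> (right_cancellative M r s cmp \<longrightarrow> cond1 \<longrightarrow> cond2)"
proof -
  interpret L: lcsc M r s cmp using cat lc by (rule lcsc.intro)
  have c2: "cond2 = C2 M r s cmp" unfolding cond2_def C2_def by (rule refl)
  have A: "cond1" if C: "C2 M r s cmp"
    unfolding cond1_def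
  proof (intro ballI)
    fix p q assume p: "p \<in> ZX M r s cmp" and q: "q \<in> ZX M r s cmp"
    show "sim1 M r s cmp p q \<longleftrightarrow> sim2 M r s cmp p q"
      using L.sim1_sim2[OF C p q] L.sim2_sim1[OF p q] by blast
  qed
  have B: "C2 M r s cmp" if c1: cond1
  proof (rule ccontr)
    assume "\<not> C2 M r s cmp"
    then obtain v E \<alpha> \<mu> \<nu> where w: "v \<in> objects M r" "E \<in> Aring M r s cmp v" "\<alpha> \<in> E" "\<mu> \<in> M" "\<nu> \<in> M"
      "r \<mu> = s \<alpha> \<and> s \<mu> = s \<alpha> \<and> r \<nu> = s \<alpha> \<and> s \<nu> = s \<alpha> \<and>
                      cmp \<mu> \<nu> = s \<alpha> \<and> cmp \<nu> \<mu> = s \<alpha> \<and> \<mu> \<noteq> s \<alpha>"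
      "\<not> (\<exists>\<beta>\<in>M. r \<beta> = s \<alpha> \<and> cmp \<alpha> \<beta> \<in> E \<and>
                         (cmp \<mu> \<beta> \<notin> rightideal M r s cmp \<beta> \<or>
                          cmp \<nu> \<beta> \<notin> rightideal M r s cmp \<beta>))"
      unfolding C2_def by blast
    have H: "\<forall>\<beta>\<in>M. r \<beta> = s \<alpha> \<and> cmp \<alpha> \<beta> \<in> E \<longrightarrow>
       cmp \<mu> \<beta> \<in> rightideal M r s cmp \<beta> \<and> cmp \<nu> \<beta> \<in> rightideal M r s cmp \<beta>"
      using w(7) by blast
    obtain p q where "p \<in> ZX M r s cmp" "q \<in> ZX M r s cmp"
       "\<not> (sim1 M r s cmp p q \<longleftrightarrow> sim2 M r s cmp p q)"
      using L.dirB[OF w(1-5) _ _ _ _ _ _ H] w(6) by blast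
    then show False using c1 unfolding cond1_def by blast
  qed
  show ?thesis using A B c2 by blast
qed

end
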